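(* Let $\mu\ge0$ be an integer and let $\gamma\ge0$, $m\ge\gamma$ and $0\le\lambda\le\gamma$ be integers. Then the function $$\mathsf{M}^{(\mu)}_m(\lambda)=\frac{1}{2\pi^{3/2}}\frac{(4\lambda+4\mu+1)\Gamma(\lambda+\frac12)\Gamma(2\mu+\frac12)\Gamma(\lambda+\mu+\frac12)}{\Gamma(\lambda+\mu+1)\Gamma(\lambda+2\mu+1)}\cdot\frac{(2\mu+2m+1)\Gamma(m-\lambda+\frac12)\Gamma(m+\lambda+2\mu+1)}{\Gamma(m-\lambda+1)\Gamma(m+\lambda+2\mu+\frac32)}$$ is decreasing with respect to $m$. *)

theory Defs
  imports "HOL-Analysis.Analysis"
begin

definition Mfun :: "nat \<Rightarrow> nat \<Rightarrow> nat \<Rightarrow> real" where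
  "Mfun mu m l =
     1 / (2 * pi powr (3/2)) *
     ((4 * real l + 4 * real mu + 1) * Gamma (real l + 1/2) * Gamma (2 * real mu + 1/2)
        * Gamma (real l + real mu + 1/2))
     / (Gamma (real l + real mu + 1) * Gamma (real l + 2 * real mu + 1)) *
     ((2 * real mu + 2 * real m + 1) * Gamma (real m - real l + 1/2)
        * Gamma (real m + real l + 2 * real mu + 1))
     / (Gamma (real m - real l + 1) * Gamma (real m + real l + 2 * real mu + 3/2))"

end

theory Submission
  imports Defs
begin

lemma G1: fixes x :: real assumes "x > 0" shows "Gamma (x + 1) = x * Gamma x"
proof -
  have "x \<notin> \<int>\<^sub>\<le>\<^sub>0" using assms by (auto elim!: nonpos_Ints_cases)
  thus ?thesis by (rule Gamma_plus1)
qed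

lemma key_ineq:
  fixes k t A :: nat
  assumes "2*t + 2 + 2*k + 1 = 2*A + 1"
  shows "(real A + 2) * (real k + 1/2) * (real t + 1) \<le> real A * (real k + 1) * (real t + 3/2)"
proof -
  define a where "a = 2 * real k + 1"
  define b where "b = 2 * real t + 2"
  define c where "c = real A"
  have s: "a + b = 2*c + 1" using assms unfolding a_def b_def c_def
    by (metis (mono_tags, lifting) add.commute add.left_commute of_nat_1 of_nat_add of_nat_mult of_nat_numeral)
  have d: "\<bar>a - b\<bar> \<ge> 1"
  proof -
    have "int (2*k+1) \<noteq> int (2*t+2)" by presburger
    hence "\<bar>int (2*k+1) - int (2*t+2)\<bar> \<ge> 1" by linarith
    hence "real_of_int \<bar>int (2*k+1) - int (2*t+2)\<bar> \<ge> 1" by linarith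
    thus ?thesis unfolding a_def b_def by simp
  qed
  have dd: "(a-b)*(a-b) \<ge> 1"
  proof -
    have "(a-b)*(a-b) = \<bar>a-b\<bar>*\<bar>a-b\<bar>" by (simp add: abs_mult_self_eq)
    also have "\<dots> \<ge> 1*1" using d by (intro mult_mono) auto
    finally show ?thesis by simp
  qed
  have e1: "4*(a*b) = (a+b)*(a+b) - (a-b)*(a-b)" by (simp add: algebra_simps)
  have e2: "(a+b)*(a+b) = 4*(c*c) + 4*c + 1" using s by (simp add: algebra_simps)
  have ab: "a*b \<le> c*c + c" using e1 e2 dd by linarith
  have goal: "(c+2)*(a*b) \<le> c*(a*b + (a+b) + 1)" using ab s by (simp add: algebra_simps)
  have "(real A + 2) * (real k + 1/2) * (real t + 1) = (c+2)*(a*b)/4"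
    unfolding a_def b_def c_def by (simp add: algebra_simps)
  moreover have "real A * (real k + 1) * (real t + 3/2) = c*(a*b + (a+b) + 1)/4"
    unfolding a_def b_def c_def by (simp add: algebra_simps)
  ultimately show ?thesis using goal by simp
qed

lemma regroup:
  fixes a b c d e A P Q R S :: real
  assumes "A \<noteq> 0" "d \<noteq> 0" "e \<noteq> 0" "R \<noteq> 0" "S \<noteq> 0"
  shows "a * (b * P) * (c * Q) / ((d * R) * (e * S)) = (a * b * c) / (A * d * e) * (A * P * Q / (R * S))"
  using assms by (simp add: field_simps)

lemma step:
  fixes mu l m :: nat
  assumes "l \<le> m"
  shows "Mfun mu (Suc m) l \<le> Mfun mu m l"
proof -
  obtain k where mk: "m = l + k" using assms le_Suc_ex by blast
  define t where "t = m + l + 2*mu"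
  define A where "A = 2*mu + 2*m + 1"
  define C where "C = 1 / (2 * pi powr (3/2)) *
     ((4 * real l + 4 * real mu + 1) * Gamma (real l + 1/2) * Gamma (2 * real mu + 1/2)
        * Gamma (real l + real mu + 1/2))
     / (Gamma (real l + real mu + 1) * Gamma (real l + 2 * real mu + 1))"
  define P where "P = Gamma (real k + 1/2)"
  define Q where "Q = Gamma (real t + 1)"
  define R where "R = Gamma (real k + 1)"
  define S where "S = Gamma (real t + 3/2)"
  have C0: "C \<ge> 0" unfolding C_def by (intro mult_nonneg_nonneg divide_nonneg_nonneg) auto
  have P0: "P > 0" "Q > 0" "R > 0" "S > 0" unfolding P_def Q_def R_def S_def by auto
  have M0: "Mfun mu m l = C * (real A * P * Q / (R * S))"
    unfolding Mfun_def C_def P_def Q_def R_def S_def A_def t_def mk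
    by (simp add: algebra_simps)
  have g1: "Gamma (real k + 1 + 1/2) = (real k + 1/2) * P"
    using G1[of "real k + 1/2"] unfolding P_def by (simp add: algebra_simps)
  have g2: "Gamma (real k + 1 + 1) = (real k + 1) * R"
    using G1[of "real k + 1"] unfolding R_def by (simp add: algebra_simps)
  have g3: "Gamma (real t + 1 + 1) = (real t + 1) * Q"
    using G1[of "real t + 1"] unfolding Q_def by (simp add: algebra_simps)
  have g4: "Gamma (real t + 1 + 3/2) = (real t + 3/2) * S"
    using G1[of "real t + 3/2"] unfolding S_def by (simp add: algebra_simps)
  have M1: "Mfun mu (Suc m) l = C * ((real A + 2) * ((real k + 1/2) * P) * ((real t + 1) * Q)
      / (((real k + 1) * R) * ((real t + 3/2) * S)))"
  proof -
    have "Mfun mu (Suc m) l = C * ((real A + 2) * Gamma (real k + 1 + 1/2) * Gamma (real t + 1 + 1)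
      / (Gamma (real k + 1 + 1) * Gamma (real t + 1 + 3/2)))"
      unfolding Mfun_def C_def A_def t_def mk
      by (simp add: algebra_simps)
    thus ?thesis using g1 g2 g3 g4 by simp
  qed
  have K: "(real A + 2) * (real k + 1/2) * (real t + 1) \<le> real A * (real k + 1) * (real t + 3/2)"
    by (rule key_ineq) (simp add: A_def t_def mk)
  have "(real A + 2) * ((real k + 1/2) * P) * ((real t + 1) * Q)
      / (((real k + 1) * R) * ((real t + 3/2) * S))
      = ((real A + 2) * (real k + 1/2) * (real t + 1)) / (real A * (real k + 1) * (real t + 3/2))
        * (real A * P * Q / (R * S))"
  proof -
    have "real A > 0" "real k + 1 > 0" "real t + 3/2 > 0" by (auto simp: A_def)
    thus ?thesis using P0 by (intro regroup) auto
  qed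
  also have "\<dots> \<le> 1 * (real A * P * Q / (R * S))"
    using K P0 by (intro mult_right_mono) (auto simp: A_def)
  finally have "(real A + 2) * ((real k + 1/2) * P) * ((real t + 1) * Q)
      / (((real k + 1) * R) * ((real t + 3/2) * S)) \<le> real A * P * Q / (R * S)" by simp
  thus ?thesis unfolding M0 M1 using C0 by (intro mult_left_mono) auto
qed

theorem lemma5p5:
  fixes mu g l m m' :: nat
  assumes "l \<le> g" and "g \<le> m" and "m \<le> m'"
  shows "Mfun mu m' l \<le> Mfun mu m l"
  using assms(3)
proof (induction m' rule: dec_induct)
  case base
  then show ?case by simp
next
  case (step n)
  have "Mfun mu (Suc n) l \<le> Mfun mu n l" using step.hyps assms by (intro Submission.step) auto
  then show ?case using step.IH by linarith
qed

end
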